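(* Let $P_{XY}$ be a probability measure on $\mathcal X\times\mathcal Y$ with $|\mathcal X|=M$. Let $L<M$ be a fixed positive integer and $\mathcal L:\mathcal Y\to\binom{\mathcal X}{L}$ a decision rule (mapping each $y$ to a subset of $\mathcal X$ of cardinality $L$), with list decoding error probability $P_{\mathcal L}:=\mathbb P[X\notin\mathcal L(Y)]$. Then for every convex $f:(0,\infty)\to\mathbb R$ with $f(1)=0$, $$\mathbb E\big[D_f(P_{X|Y}(\cdot|Y)\|U_M)\big]\ge\frac LMf\Big(\frac{M(1-P_{\mathcal L})}{L}\Big)+\Big(1-\frac LM\Big)f\Big(\frac{MP_{\mathcal L}}{M-L}\Big).$$
   Context: $U_M$ is the uniform distribution on $\mathcal X$; $D_f(P\|Q)=\sum_xQ(x)f(P(x)/Q(x))$ with $f(0):=\lim_{t\to0^+}f(t)$. *)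

theory Defs
  imports "HOL-Probability.Probability"
begin

text \<open>Extension of f to 0 by its right limit f(0) := lim_{t -> 0+} f(t),
  taken in the extended reals (the limit may be +infinity).\<close>
definition fext :: "(real \<Rightarrow> real) \<Rightarrow> real \<Rightarrow> ereal" where
  "fext f t = (if t = 0 then Lim (at_right 0) (\<lambda>s. ereal (f s)) else ereal (f t))"

definition fdiv :: "(real \<Rightarrow> real) \<Rightarrow> 'a::finite pmf \<Rightarrow> 'a pmf \<Rightarrow> ereal" where
  "fdiv f P Q = (\<Sum>x\<in>UNIV. ereal (pmf Q x) * fext f (pmf P x / pmf Q x))"

definition unif :: "'a::finite pmf" where
  "unif = pmf_of_set UNIV"

end

theory Submission
  imports Defs
begin
lemma subgrad:
  fixes f :: "real \<Rightarrow> real"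
  assumes cv: "convex_on {0<..} f" and c: "0 < c"
  shows "\<exists>s. \<forall>t>0. f c + s * (t - c) \<le> f t"
proof -
  define S where "S = (\<lambda>t. (f c - f t) / (c - t)) ` {0<..<c}"
  have ne: "S \<noteq> {}" using c unfolding S_def by auto
  have slope: "(f c - f t) / (c - t) \<le> (f u - f c) / (u - c)" if "0 < t" "t < c" "c < u" for t u
  proof -
    have 1: "(f t - f c) / (t - c) \<le> (f t - f u) / (t - u)"
      using convex_on_slope_le(1)[OF cv, of t u c] that by auto
    have 2: "(f t - f u) / (t - u) \<le> (f c - f u) / (c - u)"
      using convex_on_slope_le(2)[OF cv, of t u c] that by auto
    have e1: "(f c - f t) / (c - t) = (f t - f c) / (t - c)"
      by (metis minus_diff_eq minus_divide_divide)
    have e2: "(f u - f c) / (u - c) = (f c - f u) / (c - u)"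
      by (metis minus_diff_eq minus_divide_divide)
    show ?thesis using 1 2 e1 e2 by linarith
  qed
  have bdd: "bdd_above S" unfolding S_def bdd_above_def
    using slope[of _ "c+1"] c by (intro exI[of _ "f (c+1) - f c"]) auto
  define s where "s = Sup S"
  show ?thesis
  proof (intro exI allI impI)
    fix t :: real assume t: "0 < t"
    consider "t < c" | "t = c" | "c < t" by linarith
    then show "f c + s * (t - c) \<le> f t"
    proof cases
      case 1
      have "(f c - f t) / (c - t) \<le> s" unfolding s_def
        by (rule cSup_upper[OF _ bdd]) (use t 1 in \<open>auto simp: S_def\<close>)
      then have "f c - f t \<le> s * (c - t)" using 1 by (simp add: divide_le_eq)
      then show ?thesis by (simp add: algebra_simps)
    next
      case 2 then show ?thesis by simp
    next
      case 3
      have "s \<le> (f t - f c) / (t - c)" unfolding s_def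
        by (rule cSup_least[OF ne]) (use slope 3 in \<open>auto simp: S_def\<close>)
      then have "s * (t - c) \<le> f t - f c" using 3 by (simp add: le_divide_eq)
      then show ?thesis by simp
    qed
  qed
qed

lemma fext_tendsto:
  fixes f :: "real \<Rightarrow> real"
  assumes cv: "convex_on {0<..} f"
  and s1: "\<And>t. t > 0 \<Longrightarrow> f 1 + s1 * (t - 1) \<le> f t"
  shows "((\<lambda>s. ereal (f s)) \<longlongrightarrow> fext f 0) (at_right 0)"
proof -
  define g where "g t = f t - (f 1 + s1 * (t - 1))" for t
  have g0: "0 \<le> g t" if "t > 0" for t using s1[OF that] by (simp add: g_def)
  have g1: "g 1 = 0" by (simp add: g_def)
  have anti: "g u \<le> g t" if "0 < t" "t < u" "u \<le> 1" for t u
  proof (cases "u = 1")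
    case True then show ?thesis using g0 g1 that by simp
  next
    case False
    define l where "l = (1 - u) / (1 - t)"
    have l: "0 \<le> l" "l \<le> 1" using that False by (auto simp: l_def divide_simps)
    have ne: "1 - t \<noteq> 0" using that by simp
    have lt: "l * (1 - t) = 1 - u" using ne by (simp add: l_def)
    have u: "u = (1 - (1 - l)) *\<^sub>R t + (1 - l) *\<^sub>R 1"
      using lt by (simp add: algebra_simps)
    have "f ((1 - (1 - l)) *\<^sub>R t + (1 - l) *\<^sub>R 1) \<le> (1 - (1 - l)) * f t + (1 - l) * f 1"
      by (rule convex_onD[OF cv]) (use l that in auto)
    then have fu: "f u \<le> l * f t + (1 - l) * f 1" using u by simp
    have "u - 1 = l * (t - 1)" using lt by (simp add: algebra_simps)
    then have su: "s1 * (u - 1) = l * (s1 * (t - 1))" by (metis mult.left_commute)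
    have e1: "l * g t = l * f t - l * f 1 - l * (s1 * (t - 1))"
      unfolding g_def by (simp only: right_diff_distrib distrib_left)
    have e2: "(1 - l) * f 1 = f 1 - l * f 1" by (simp only: left_diff_distrib mult_1)
    have e3: "s1 * (u - 1) = s1 * u - s1" by (simp only: right_diff_distrib mult_1_right)
    have "g u \<le> l * g t" using fu su e1 e2 unfolding g_def by linarith
    also have "\<dots> \<le> g t" using l g0[of t] that by (simp add: mult_left_le_one_le)
    finally show ?thesis .
  qed
  define Lm where "Lm = (SUP t\<in>{0<..<1}. ereal (g t))"
  have gl: "((\<lambda>t. ereal (g t)) \<longlongrightarrow> Lm) (at_right 0)"
  proof (rule order_tendstoI)
    fix a assume "a < Lm"
    then have "\<exists>t0\<in>{0<..<1}. a < ereal (g t0)" unfolding Lm_def by (simp add: less_SUP_iff)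
    then obtain t0 where t0: "t0 \<in> {0<..<1}" "a < ereal (g t0)" by blast
    show "\<forall>\<^sub>F t in at_right 0. a < ereal (g t)"
      unfolding eventually_at_right_field
    proof (intro exI[of _ t0] conjI allI impI)
      show "0 < t0" using t0 by simp
      fix t :: real assume "0 < t" "t < t0"
      then have "g t0 \<le> g t" using anti[of t t0] t0 by simp
      then have "ereal (g t0) \<le> ereal (g t)" by simp
      then show "a < ereal (g t)" using t0(2) by (rule less_le_trans[rotated])
    qed
  next
    fix a assume a: "Lm < a"
    show "\<forall>\<^sub>F t in at_right 0. ereal (g t) < a"
      unfolding eventually_at_right_field
    proof (intro exI[of _ 1] conjI allI impI)
      fix t :: real assume "0 < t" "t < 1"
      then have "ereal (g t) \<le> Lm" unfolding Lm_def by (intro SUP_upper) auto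
      then show "ereal (g t) < a" using a by simp
    qed simp
  qed
  have Lm0: "\<bar>ereal (f 1 - s1)\<bar> \<noteq> \<infinity>" by simp
  have aff: "((\<lambda>t. ereal (f 1 + s1 * (t - 1))) \<longlongrightarrow> ereal (f 1 - s1)) (at_right 0)"
    by (rule tendsto_ereal) (auto intro!: tendsto_eq_intros)
  have "((\<lambda>t. ereal (g t) + ereal (f 1 + s1 * (t - 1))) \<longlongrightarrow> Lm + ereal (f 1 - s1)) (at_right 0)"
    by (rule tendsto_add_ereal_general1[OF Lm0 gl aff])
  then have *: "((\<lambda>s. ereal (f s)) \<longlongrightarrow> Lm + ereal (f 1 - s1)) (at_right 0)"
    by (simp add: g_def)
  then have "fext f 0 = Lm + ereal (f 1 - s1)"
    unfolding fext_def by (simp add: tendsto_Lim)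
  with * show ?thesis by simp
qed
lemma fext_ge:
  fixes f :: "real \<Rightarrow> real"
  assumes cv: "convex_on {0<..} f" and sc: "\<And>t. t > 0 \<Longrightarrow> f c + s * (t - c) \<le> f t"
    and t: "0 \<le> t"
  shows "ereal (f c + s * (t - c)) \<le> fext f t"
proof (cases "t = 0")
  case False
  then show ?thesis using sc[of t] t by (simp add: fext_def)
next
  case True
  obtain s1 where s1: "\<And>t. t > 0 \<Longrightarrow> f 1 + s1 * (t - 1) \<le> f t"
    using subgrad[OF cv, of 1] by auto
  have lim: "((\<lambda>s. ereal (f s)) \<longlongrightarrow> fext f 0) (at_right 0)"
    by (rule fext_tendsto[OF cv s1])
  have lin: "((\<lambda>t. ereal (f c + s * (t - c))) \<longlongrightarrow> ereal (f c + s * (0 - c))) (at_right 0)"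
    by (rule tendsto_ereal) (auto intro!: tendsto_eq_intros)
  have ev: "\<forall>\<^sub>F t in at_right 0. ereal (f c + s * (t - c)) \<le> ereal (f t)"
    unfolding eventually_at_right_field using sc by (intro exI[of _ 1]) auto
  have "ereal (f c + s * (0 - c)) \<le> fext f 0"
    by (rule tendsto_le[OF _ lim lin ev]) simp
  then show ?thesis using True by simp
qed

lemma sum_const_ereal:
  assumes "finite A" "0 \<le> r"
  shows "(\<Sum>x\<in>A. ereal r * X) = ereal (real (card A) * r) * X"
  using assms(1)
proof (induction A rule: finite_induct)
  case empty then show ?case by simp
next
  case (insert a A)
  have "(\<Sum>x\<in>insert a A. ereal r * X) = ereal r * X + ereal (real (card A) * r) * X"
    using insert by simp
  also have "\<dots> = (ereal r + ereal (real (card A) * r)) * X"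
    by (rule ereal_left_distrib[symmetric]) (use assms(2) in auto)
  also have "\<dots> = ereal (real (card (insert a A)) * r) * X"
    using insert by (simp add: algebra_simps)
  finally show ?case .
qed

lemma lin_term:
  fixes f :: "real \<Rightarrow> real"
  assumes cv: "convex_on {0<..} f" and sc: "\<And>t. t > 0 \<Longrightarrow> f c + s * (t - c) \<le> f t"
    and p: "0 \<le> p" and M: "0 < M"
  shows "ereal ((1 / M) * (f c - s * c) + s * p) \<le> ereal (1 / M) * fext f (M * p)"
proof -
  have "ereal (f c + s * (M * p - c)) \<le> fext f (M * p)"
    using fext_ge[OF cv sc, of "M * p"] p M by simp
  then have "ereal (1 / M) * ereal (f c + s * (M * p - c)) \<le> ereal (1 / M) * fext f (M * p)"
    by (rule ereal_mult_left_mono) (use M in simp)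
  moreover have "(1 / M) * (f c + s * (M * p - c)) = (1 / M) * (f c - s * c) + s * p"
    using M by (simp add: field_simps)
  ultimately show ?thesis by simp
qed

lemma low_int:
  assumes PY: "prob_space PY" and H: "integrable PY H"
    and le: "\<And>y. y \<in> space PY \<Longrightarrow> ereal (H y) \<le> D y"
  shows "ereal (integral\<^sup>L PY H) \<le> enn2ereal (\<integral>\<^sup>+ y. e2ennreal (D y) \<partial>PY)"
proof -
  have Hm: "integrable PY (\<lambda>y. max (H y) 0)" using H by auto
  have A: "integral\<^sup>L PY H \<le> integral\<^sup>L PY (\<lambda>y. max (H y) 0)"
    by (rule integral_mono[OF H Hm]) simp
  have "ennreal (integral\<^sup>L PY (\<lambda>y. max (H y) 0)) = (\<integral>\<^sup>+ y. ennreal (max (H y) 0) \<partial>PY)"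
    by (rule nn_integral_eq_integral[symmetric, OF Hm]) simp
  also have "\<dots> \<le> (\<integral>\<^sup>+ y. e2ennreal (D y) \<partial>PY)"
  proof (rule nn_integral_mono)
    fix y assume y: "y \<in> space PY"
    have "ennreal (max (H y) 0) = e2ennreal (ereal (H y))"
      by (simp add: e2ennreal_ereal ennreal_max_0)
    also have "\<dots> \<le> e2ennreal (D y)" by (rule e2ennreal_mono[OF le[OF y]])
    finally show "ennreal (max (H y) 0) \<le> e2ennreal (D y)" .
  qed
  finally have B: "ennreal (integral\<^sup>L PY (\<lambda>y. max (H y) 0)) \<le> (\<integral>\<^sup>+ y. e2ennreal (D y) \<partial>PY)" .
  have nn: "0 \<le> integral\<^sup>L PY (\<lambda>y. max (H y) 0)" by (rule Bochner_Integration.integral_nonneg) simp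
  have "ereal (integral\<^sup>L PY H) \<le> ereal (integral\<^sup>L PY (\<lambda>y. max (H y) 0))" using A by simp
  also have "\<dots> = enn2ereal (ennreal (integral\<^sup>L PY (\<lambda>y. max (H y) 0)))"
    using nn by (simp add: enn2ereal_ennreal)
  also have "\<dots> \<le> enn2ereal (\<integral>\<^sup>+ y. e2ennreal (D y) \<partial>PY)"
    using B by (simp add: less_eq_ennreal.rep_eq)
  finally show ?thesis .
qed

lemma low_const:
  assumes PY: "prob_space PY" and le: "AE y in PY. C \<le> D y"
  shows "C \<le> enn2ereal (\<integral>\<^sup>+ y. e2ennreal (D y) \<partial>PY)"
proof (cases "C \<le> 0")
  case True
  then show ?thesis by (meson enn2ereal_nonneg order_trans)
next
  case False
  have "(\<integral>\<^sup>+ y. e2ennreal C \<partial>PY) \<le> (\<integral>\<^sup>+ y. e2ennreal (D y) \<partial>PY)"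
    by (rule nn_integral_mono_AE) (use le in \<open>auto intro: e2ennreal_mono\<close>)
  moreover have "(\<integral>\<^sup>+ y. e2ennreal C \<partial>PY) = e2ennreal C"
    using prob_space.emeasure_space_1[OF PY] by simp
  ultimately have "e2ennreal C \<le> (\<integral>\<^sup>+ y. e2ennreal (D y) \<partial>PY)" by simp
  then have "enn2ereal (e2ennreal C) \<le> enn2ereal (\<integral>\<^sup>+ y. e2ennreal (D y) \<partial>PY)"
    by (simp add: less_eq_ennreal.rep_eq)
  then show ?thesis using False by (simp add: enn2ereal_e2ennreal)
qed

lemma split_bound:
  fixes T A B :: "'x::finite \<Rightarrow> ereal"
  assumes "\<And>x. x \<in> S \<Longrightarrow> A x \<le> T x" "\<And>x. x \<in> - S \<Longrightarrow> B x \<le> T x"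
  shows "(\<Sum>x\<in>S. A x) + (\<Sum>x\<in>- S. B x) \<le> (\<Sum>x\<in>UNIV. T x)"
proof -
  have u: "S \<union> - S = UNIV" by auto
  have "(\<Sum>x\<in>UNIV. T x) = (\<Sum>x\<in>S. T x) + (\<Sum>x\<in>- S. T x)"
    by (subst u[symmetric], rule sum.union_disjoint) auto
  moreover have "(\<Sum>x\<in>S. A x) + (\<Sum>x\<in>- S. B x) \<le> (\<Sum>x\<in>S. T x) + (\<Sum>x\<in>- S. T x)"
    by (intro add_mono sum_mono assms)
  ultimately show ?thesis by simp
qed

lemma lin_sum:
  fixes p :: "'x \<Rightarrow> real"
  assumes "finite S"
  shows "(\<Sum>x\<in>S. ereal ((1 / M) * (fc - s * c) + s * p x))
         = ereal (real (card S) / M * (fc - s * c) + s * (\<Sum>x\<in>S. p x))"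
  using assms by (simp add: sum_ereal sum.distrib sum_distrib_left)

lemma fdiv_unif:
  fixes P :: "'x::finite pmf"
  shows "fdiv f P unif = (\<Sum>x\<in>UNIV. ereal (1 / real CARD('x)) * fext f (real CARD('x) * pmf P x))"
  unfolding fdiv_def unif_def
  by (intro sum.cong refl) (simp add: pmf_of_set mult.commute)

theorem theorem11:
  fixes PY :: "'y measure" and K :: "'y \<Rightarrow> 'x::finite pmf"
    and Lst :: "'y \<Rightarrow> 'x set" and L :: nat and f :: "real \<Rightarrow> real"
  assumes "prob_space PY"
    and "\<And>x. (\<lambda>y. pmf (K y) x) \<in> borel_measurable PY"
    and "0 < L" and "L < CARD('x)"
    and "\<And>y. y \<in> space PY \<Longrightarrow> card (Lst y) = L"
    and "\<And>x. {y \<in> space PY. x \<in> Lst y} \<in> sets PY"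
    and "convex_on {0<..} f" and "f 1 = 0"
  defines "M \<equiv> real CARD('x)"
    and "PL \<equiv> (\<integral>y. measure_pmf.prob (K y) (- Lst y) \<partial>PY)"
  shows "enn2ereal (\<integral>\<^sup>+ y. e2ennreal (fdiv f (K y) unif) \<partial>PY)
           \<ge> ereal (real L / M) * fext f (M * (1 - PL) / real L)
             + ereal (1 - real L / M) * fext f (M * PL / (M - real L))"
proof -
  note PY = assms(1) and cv = assms(7)
  define m where "m = CARD('x)"
  have mL: "L < m" using assms(4) m_def by simp
  have M_eq: "M = real m" using M_def m_def by simp
  have Mpos: "0 < M" using M_eq mL by simp
  have hML: "real L < M" using M_eq mL by simp
  have Lpos: "0 < real L" using assms(3) by simp
  define e where "e y = measure_pmf.prob (K y) (- Lst y)" for y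
  have PL_e: "PL = integral\<^sup>L PY e" unfolding PL_def e_def[abs_def] by (rule refl)
  have e_sum: "e y = (\<Sum>x\<in>- Lst y. pmf (K y) x)" for y
    by (simp add: e_def measure_measure_pmf_finite)
  have q_sum: "(\<Sum>x\<in>Lst y. pmf (K y) x) = 1 - e y" for y
  proof -
    have "measure_pmf.prob (K y) (UNIV - Lst y) = 1 - measure_pmf.prob (K y) (Lst y)"
      using measure_pmf.prob_compl[of "Lst y" "K y"] by simp
    then show ?thesis by (simp add: e_def measure_measure_pmf_finite Compl_eq_Diff_UNIV)
  qed
  have e0: "0 \<le> e y" for y by (simp add: e_def)
  have e1: "e y \<le> 1" for y by (simp add: e_def)
  have cardC: "card (- Lst y) = m - L" if "y \<in> space PY" for y
  proof -
    have "card (UNIV - Lst y) = card (UNIV :: 'x set) - card (Lst y)"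
      by (rule card_Diff_subset) auto
    then show ?thesis using assms(5)[OF that] m_def by (simp add: Compl_eq_Diff_UNIV)
  qed
  have cardC': "real (card (- Lst y)) = M - real L" if "y \<in> space PY" for y
    using cardC[OF that] mL M_eq by (simp add: of_nat_diff)
  have e_meas: "e \<in> borel_measurable PY"
  proof -
    have meas: "(\<lambda>y. \<Sum>x\<in>UNIV. pmf (K y) x * indicator (space PY - {y \<in> space PY. x \<in> Lst y}) y)
          \<in> borel_measurable PY"
      using assms(2,6) by (intro borel_measurable_sum borel_measurable_times borel_measurable_indicator) auto
    have eq: "e y = (\<Sum>x\<in>UNIV. pmf (K y) x * indicator (space PY - {y \<in> space PY. x \<in> Lst y}) y)"
      if "y \<in> space PY" for y
    proof -
      have "e y = sum (\<lambda>x. pmf (K y) x) (UNIV \<inter> - Lst y)" using e_sum by simp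
      also have "\<dots> = (\<Sum>x\<in>UNIV. if x \<in> - Lst y then pmf (K y) x else 0)"
        by (rule sum.inter_restrict) simp
      also have "\<dots> = (\<Sum>x\<in>UNIV. pmf (K y) x * indicator (space PY - {y \<in> space PY. x \<in> Lst y}) y)"
        using that by (intro sum.cong refl) (auto simp: indicator_def)
      finally show ?thesis .
    qed
    show ?thesis using measurable_cong[of PY e, OF eq] meas by blast
  qed
  have fin: "finite_measure PY" using PY unfolding prob_space_def by simp
  have e_int: "integrable PY e"
    by (rule finite_measure.integrable_const_bound[OF fin, where B=1]) (use e0 e1 e_meas in auto)
  have sp1: "measure PY (space PY) = 1" using prob_space.prob_space[OF PY] .
  have int_aff: "integral\<^sup>L PY (\<lambda>y. C + D * e y) = C + D * PL" for C D
  proof -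
    have "integral\<^sup>L PY (\<lambda>y. C + D * e y) = integral\<^sup>L PY (\<lambda>y. C) + integral\<^sup>L PY (\<lambda>y. D * e y)"
      by (rule Bochner_Integration.integral_add) (use e_int finite_measure.integrable_const[OF fin] in auto)
    also have "\<dots> = C + D * PL" using sp1 by (simp add: PL_e)
    finally show ?thesis .
  qed
  have int_aff': "integrable PY (\<lambda>y. C + D * e y)" for C D
    by (intro Bochner_Integration.integrable_add integrable_mult_right e_int finite_measure.integrable_const[OF fin])
  have PL0: "0 \<le> PL" unfolding PL_e by (rule Bochner_Integration.integral_nonneg) (simp add: e0)
  have PL1: "PL \<le> 1"
    unfolding PL_e by (rule prob_space.integral_le_const[OF PY e_int]) (simp add: e1)
  have fdivK: "fdiv f (K y) unif = (\<Sum>x\<in>UNIV. ereal (1 / M) * fext f (M * pmf (K y) x))" for y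
    by (simp add: fdiv_unif M_def)
  have Lcard: "real (card (Lst y)) = real L" if "y \<in> space PY" for y using assms(5)[OF that] by simp
  have fin_all: "finite (A :: 'x set)" for A by simp
  consider "PL = 0" | "PL = 1" | "0 < PL \<and> PL < 1" using PL0 PL1 by linarith
  then show ?thesis
  proof cases
    case 3
    define a where "a = M * (1 - PL) / real L"
    define b where "b = M * PL / (M - real L)"
    have apos: "0 < a" using 3 Mpos Lpos by (simp add: a_def)
    have bpos: "0 < b" using 3 Mpos hML by (simp add: b_def)
    obtain sa where sa: "\<And>t. t > 0 \<Longrightarrow> f a + sa * (t - a) \<le> f t" using subgrad[OF cv apos] by auto
    obtain sb where sb: "\<And>t. t > 0 \<Longrightarrow> f b + sb * (t - b) \<le> f t" using subgrad[OF cv bpos] by auto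
    define C0 where "C0 = real L / M * (f a - sa * a) + sa + (M - real L) / M * (f b - sb * b)"
    have bound: "ereal (C0 + (sb - sa) * e y) \<le> fdiv f (K y) unif" if y: "y \<in> space PY" for y
    proof -
      have A: "ereal ((1 / M) * (f a - sa * a) + sa * pmf (K y) x) \<le> ereal (1 / M) * fext f (M * pmf (K y) x)" for x
        by (rule lin_term[OF cv sa pmf_nonneg Mpos])
      have B: "ereal ((1 / M) * (f b - sb * b) + sb * pmf (K y) x) \<le> ereal (1 / M) * fext f (M * pmf (K y) x)" for x
        by (rule lin_term[OF cv sb pmf_nonneg Mpos])
      have "(\<Sum>x\<in>Lst y. ereal ((1 / M) * (f a - sa * a) + sa * pmf (K y) x))
          + (\<Sum>x\<in>- Lst y. ereal ((1 / M) * (f b - sb * b) + sb * pmf (K y) x)) \<le> fdiv f (K y) unif"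
        unfolding fdivK by (rule split_bound[OF A B])
      moreover have "(\<Sum>x\<in>Lst y. ereal ((1 / M) * (f a - sa * a) + sa * pmf (K y) x))
          = ereal (real L / M * (f a - sa * a) + sa * (1 - e y))"
        using lin_sum[OF fin_all] Lcard[OF y] q_sum by simp
      moreover have "(\<Sum>x\<in>- Lst y. ereal ((1 / M) * (f b - sb * b) + sb * pmf (K y) x))
          = ereal ((M - real L) / M * (f b - sb * b) + sb * e y)"
        using lin_sum[OF fin_all] cardC'[OF y] e_sum by simp
      moreover have "real L / M * (f a - sa * a) + sa * (1 - e y) + ((M - real L) / M * (f b - sb * b) + sb * e y)
          = C0 + (sb - sa) * e y"
        unfolding C0_def by (simp add: algebra_simps)
      ultimately show ?thesis by simp
    qed
    have low: "ereal (integral\<^sup>L PY (\<lambda>y. C0 + (sb - sa) * e y))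
        \<le> enn2ereal (\<integral>\<^sup>+ y. e2ennreal (fdiv f (K y) unif) \<partial>PY)"
      by (rule low_int[OF PY int_aff' bound])
    have ha: "real L / M * a = 1 - PL" using Mpos Lpos by (simp add: a_def)
    have hb: "(M - real L) / M * b = PL" using Mpos hML by (simp add: b_def)
    have e1': "real L / M * (f a - sa * a) = real L / M * f a - sa * (real L / M * a)"
      by (simp add: algebra_simps)
    have e2': "(M - real L) / M * (f b - sb * b) = (1 - real L / M) * f b - sb * ((M - real L) / M * b)"
      using Mpos by (simp add: field_simps)
    have "C0 + (sb - sa) * PL = real L / M * f a + (1 - real L / M) * f b"
      unfolding C0_def e1' e2' ha hb by (simp add: algebra_simps)
    then have "integral\<^sup>L PY (\<lambda>y. C0 + (sb - sa) * e y) = real L / M * f a + (1 - real L / M) * f b"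
      using int_aff by simp
    moreover have "fext f (M * (1 - PL) / real L) = ereal (f a)"
      using apos by (simp add: fext_def a_def[symmetric])
    moreover have "fext f (M * PL / (M - real L)) = ereal (f b)"
      using bpos by (simp add: fext_def b_def[symmetric])
    ultimately show ?thesis using low by simp
  next
    case 1
    define a where "a = M / real L"
    have apos: "0 < a" using Mpos Lpos by (simp add: a_def)
    obtain sa where sa: "\<And>t. t > 0 \<Longrightarrow> f a + sa * (t - a) \<le> f t" using subgrad[OF cv apos] by auto
    define C where "C = ereal (real L / M * f a) + ereal (1 - real L / M) * fext f 0"
    have AE0: "AE y in PY. e y = 0"
      using integral_nonneg_eq_0_iff_AE[OF e_int] 1 e0 by (simp add: PL_e)
    have bound: "C \<le> fdiv f (K y) unif" if y: "y \<in> space PY" and ey: "e y = 0" for y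
    proof -
      have z: "pmf (K y) x = 0" if "x \<in> - Lst y" for x
        using e_sum[of y] ey sum_nonneg_eq_0_iff[of "- Lst y" "pmf (K y)"] that by simp
      have A: "ereal ((1 / M) * (f a - sa * a) + sa * pmf (K y) x) \<le> ereal (1 / M) * fext f (M * pmf (K y) x)" for x
        by (rule lin_term[OF cv sa pmf_nonneg Mpos])
      have B: "ereal (1 / M) * fext f 0 \<le> ereal (1 / M) * fext f (M * pmf (K y) x)" if "x \<in> - Lst y" for x
        using z[OF that] by simp
      have "(\<Sum>x\<in>Lst y. ereal ((1 / M) * (f a - sa * a) + sa * pmf (K y) x))
          + (\<Sum>x\<in>- Lst y. ereal (1 / M) * fext f 0) \<le> fdiv f (K y) unif"
        unfolding fdivK by (rule split_bound[OF A B])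
      moreover have "(\<Sum>x\<in>Lst y. ereal ((1 / M) * (f a - sa * a) + sa * pmf (K y) x))
          = ereal (real L / M * (f a - sa * a) + sa * (1 - e y))"
        using lin_sum[OF fin_all] Lcard[OF y] q_sum by simp
      moreover have "real L / M * (f a - sa * a) + sa * (1 - e y) = real L / M * f a"
        using ey Mpos Lpos by (simp add: a_def algebra_simps)
      moreover have "(\<Sum>x\<in>- Lst y. ereal (1 / M) * fext f 0) = ereal (1 - real L / M) * fext f 0"
      proof -
        have "(\<Sum>x\<in>- Lst y. ereal (1 / M) * fext f 0) = ereal (real (card (- Lst y)) * (1 / M)) * fext f 0"
          by (rule sum_const_ereal) (use Mpos in auto)
        also have "real (card (- Lst y)) * (1 / M) = 1 - real L / M"
          using cardC'[OF y] Mpos by (simp add: field_simps)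
        finally show ?thesis .
      qed
      ultimately show ?thesis by (simp add: C_def)
    qed
    have "AE y in PY. C \<le> fdiv f (K y) unif"
      using AE0 AE_space by eventually_elim (rule bound)
    then have low: "C \<le> enn2ereal (\<integral>\<^sup>+ y. e2ennreal (fdiv f (K y) unif) \<partial>PY)"
      by (rule low_const[OF PY])
    have "M * (1 - PL) / real L = a" using 1 by (simp add: a_def)
    then have r1: "fext f (M * (1 - PL) / real L) = ereal (f a)"
      using apos by (simp add: fext_def)
    have r2: "M * PL / (M - real L) = 0" using 1 by simp
    show ?thesis unfolding r1 r2 using low by (simp add: C_def)
  next
    case 2
    define b where "b = M / (M - real L)"
    have bpos: "0 < b" using Mpos hML by (simp add: b_def)
    obtain sb where sb: "\<And>t. t > 0 \<Longrightarrow> f b + sb * (t - b) \<le> f t" using subgrad[OF cv bpos] by auto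
    define C where "C = ereal (real L / M) * fext f 0 + ereal ((1 - real L / M) * f b)"
    have AE1: "AE y in PY. 1 + (-1) * e y = 0"
      using integral_nonneg_eq_0_iff_AE[OF int_aff'[of 1 "-1"]] int_aff[of 1 "-1"] 2 e1 by simp
    have bound: "C \<le> fdiv f (K y) unif" if y: "y \<in> space PY" and ey: "1 + (-1) * e y = 0" for y
    proof -
      have z: "pmf (K y) x = 0" if "x \<in> Lst y" for x
        using q_sum[of y] ey sum_nonneg_eq_0_iff[of "Lst y" "pmf (K y)"] that by simp
      have A: "ereal (1 / M) * fext f 0 \<le> ereal (1 / M) * fext f (M * pmf (K y) x)" if "x \<in> Lst y" for x
        using z[OF that] by simp
      have B: "ereal ((1 / M) * (f b - sb * b) + sb * pmf (K y) x) \<le> ereal (1 / M) * fext f (M * pmf (K y) x)" for x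
        by (rule lin_term[OF cv sb pmf_nonneg Mpos])
      have "(\<Sum>x\<in>Lst y. ereal (1 / M) * fext f 0)
          + (\<Sum>x\<in>- Lst y. ereal ((1 / M) * (f b - sb * b) + sb * pmf (K y) x)) \<le> fdiv f (K y) unif"
        unfolding fdivK by (rule split_bound[OF A B])
      moreover have "(\<Sum>x\<in>- Lst y. ereal ((1 / M) * (f b - sb * b) + sb * pmf (K y) x))
          = ereal ((M - real L) / M * (f b - sb * b) + sb * e y)"
        using lin_sum[OF fin_all] cardC'[OF y] e_sum by simp
      moreover have "(M - real L) / M * (f b - sb * b) + sb * e y = (1 - real L / M) * f b"
        using ey Mpos hML by (simp add: b_def field_simps)
      moreover have "(\<Sum>x\<in>Lst y. ereal (1 / M) * fext f 0) = ereal (real L / M) * fext f 0"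
      proof -
        have "(\<Sum>x\<in>Lst y. ereal (1 / M) * fext f 0) = ereal (real (card (Lst y)) * (1 / M)) * fext f 0"
          by (rule sum_const_ereal) (use Mpos in auto)
        also have "real (card (Lst y)) * (1 / M) = real L / M"
          using Lcard[OF y] by simp
        finally show ?thesis .
      qed
      ultimately show ?thesis by (simp add: C_def)
    qed
    have "AE y in PY. C \<le> fdiv f (K y) unif"
      using AE1 AE_space by eventually_elim (rule bound)
    then have low: "C \<le> enn2ereal (\<integral>\<^sup>+ y. e2ennreal (fdiv f (K y) unif) \<partial>PY)"
      by (rule low_const[OF PY])
    have "M * PL / (M - real L) = b" using 2 by (simp add: b_def)
    then have r1: "fext f (M * PL / (M - real L)) = ereal (f b)"
      using bpos by (simp add: fext_def)
    have r2: "M * (1 - PL) / real L = 0" using 2 by simp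
    show ?thesis unfolding r1 r2 using low by (simp add: C_def)
  qed
qed

end
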